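(* Let $W$ be a finite set of possible worlds, let $\Delta$ be a backbone (a sequence $U_1,\dots,U_n$ of subsets of $W$), and let $BA(\Delta)$ be the set of belief algebras on $W$ whose backbone is $\Delta$. Suppose $G_1,G_2\in BA(\Delta)$. Then: (1) $G_1\cap G_2\in BA(\Delta)$; (2) $\operatorname{Gen}(G_1\cup G_2)$ is a belief algebra, and $\operatorname{Gen}(G_1\cup G_2)\in BA(\Delta)$.
   Context: $W$ is a finite nonempty set; $R_W=\{(U,V)\mid U,V\subseteq W,\ U\cap V=\varnothing\}$. A belief algebra on $W$ is a pair $(2^W,\gg)$, $\gg$ a binary relation on $2^W$, such that for all $U,V,U_1,V_1,U_2,V_2\subseteq W$: (A0) $\gg\subseteq R_W$; (A1) $U\gg\varnothing$ iff $U\neq\varnothing$; (A2) $U\gg V$ implies not $V\gg U$; (A3) if $U_1\supseteq U$, $U\gg V$, $V\supseteq V_1$, $U_1\cap V_1=\varnothing$ then $U_1\gg V_1$; (A4) if $U=U_1\cup V_1=U_2\cup V_2$, $U_1\gg V_1$, $U_2\gg V_2$ then $U_1\cap U_2\gg V_1\cup V_2$. Belief algebras are identified with their relations as sets of pairs; $\cap,\cup$ refer to these sets. For $\Omega\subseteq R_W$, $\operatorname{Gen}(\Omega)$ is the smallest subset of $R_W$ that contains $\Omega$, contains $(U,\varnothing)$ for every nonempty $U\subseteq W$, and is closed under: if $(U,V)$ is in it, $U\subseteq U_1$, $V_1\subseteq V$, $U_1\cap V_1=\varnothing$ then $(U_1,V_1)$ is in it; if $U_1\cup V_1=U_2\cup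 V_2$ and $(U_1,V_1),(U_2,V_2)$ are in it then $(U_1\cap U_2,V_1\cup V_2)$ is in it. Every belief algebra $(2^W,\gg)$ has a unique backbone: a sequence $U_1,\dots,U_n$ of nonempty pairwise disjoint sets with union $W$, with $U_i\gg U_{i+1}$ for $i<n$, such that for each $i$ any two disjoint nonempty subsets $V_1,V_2$ of $U_i$ satisfy $(V_1,V_2)\notin\gg$ and $(V_2,V_1)\notin\gg$. *)

theory Defs
  imports Main
begin

definition R_W :: "'a set \<Rightarrow> ('a set \<times> 'a set) set" where
  "R_W W = {(U, V). U \<subseteq> W \<and> V \<subseteq> W \<and> U \<inter> V = {}}"

definition belief_algebra :: "'a set \<Rightarrow> ('a set \<times> 'a set) set \<Rightarrow> bool" where
  "belief_algebra W G \<longleftrightarrow>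
     G \<subseteq> R_W W \<and>
     (\<forall>U. U \<subseteq> W \<longrightarrow> ((U, {}) \<in> G \<longleftrightarrow> U \<noteq> {})) \<and>
     (\<forall>U V. U \<subseteq> W \<longrightarrow> V \<subseteq> W \<longrightarrow> (U, V) \<in> G \<longrightarrow> (V, U) \<notin> G) \<and>
     (\<forall>U V U1 V1. U \<subseteq> W \<longrightarrow> V \<subseteq> W \<longrightarrow> U1 \<subseteq> W \<longrightarrow> V1 \<subseteq> W \<longrightarrow>
        U \<subseteq> U1 \<longrightarrow> (U, V) \<in> G \<longrightarrow> V1 \<subseteq> V \<longrightarrow> U1 \<inter> V1 = {} \<longrightarrow> (U1, V1) \<in> G) \<and>
     (\<forall>U1 V1 U2 V2. U1 \<subseteq> W \<longrightarrow> V1 \<subseteq> W \<longrightarrow> U2 \<subseteq> W \<longrightarrow> V2 \<subseteq> W \<longrightarrow>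
        U1 \<union> V1 = U2 \<union> V2 \<longrightarrow> (U1, V1) \<in> G \<longrightarrow> (U2, V2) \<in> G \<longrightarrow>
        (U1 \<inter> U2, V1 \<union> V2) \<in> G)"

inductive_set Gen :: "'a set \<Rightarrow> ('a set \<times> 'a set) set \<Rightarrow> ('a set \<times> 'a set) set"
  for W :: "'a set" and \<Omega> :: "('a set \<times> 'a set) set" where
  base: "p \<in> \<Omega> \<Longrightarrow> p \<in> R_W W \<Longrightarrow> p \<in> Gen W \<Omega>"
| empty: "U \<subseteq> W \<Longrightarrow> U \<noteq> {} \<Longrightarrow> (U, {}) \<in> Gen W \<Omega>"
| mono: "(U, V) \<in> Gen W \<Omega> \<Longrightarrow> U \<subseteq> U1 \<Longrightarrow> U1 \<subseteq> W \<Longrightarrow> V1 \<subseteq> V \<Longrightarrow>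
         U1 \<inter> V1 = {} \<Longrightarrow> (U1, V1) \<in> Gen W \<Omega>"
| inter: "(U1, V1) \<in> Gen W \<Omega> \<Longrightarrow> (U2, V2) \<in> Gen W \<Omega> \<Longrightarrow> U1 \<union> V1 = U2 \<union> V2 \<Longrightarrow>
         (U1 \<inter> U2, V1 \<union> V2) \<in> Gen W \<Omega>"

definition is_backbone :: "'a set \<Rightarrow> ('a set \<times> 'a set) set \<Rightarrow> 'a set list \<Rightarrow> bool" where
  "is_backbone W G Us \<longleftrightarrow>
     (\<forall>i < length Us. Us ! i \<noteq> {}) \<and>
     (\<forall>i < length Us. \<forall>j < length Us. i \<noteq> j \<longrightarrow> Us ! i \<inter> Us ! j = {}) \<and>
     \<Union> (set Us) = W \<and>
     (\<forall>i. Suc i < length Us \<longrightarrow> (Us ! i, Us ! Suc i) \<in> G) \<and>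
     (\<forall>i < length Us. \<forall>V1 V2. V1 \<subseteq> Us ! i \<longrightarrow> V2 \<subseteq> Us ! i \<longrightarrow> V1 \<noteq> {} \<longrightarrow> V2 \<noteq> {} \<longrightarrow>
        V1 \<inter> V2 = {} \<longrightarrow> (V1, V2) \<notin> G \<and> (V2, V1) \<notin> G)"

definition BA :: "'a set \<Rightarrow> 'a set list \<Rightarrow> ('a set \<times> 'a set) set set" where
  "BA W \<Delta> = {G. belief_algebra W G \<and> is_backbone W G \<Delta>}"

end

theory Submission
  imports Defs
begin

lemma min_exists:
  fixes f :: "'a \<Rightarrow> nat"
  assumes "x \<in> S"
  shows "\<exists>w\<in>S. \<forall>y\<in>S. f w \<le> f y"
proof -
  define n where "n = (LEAST n. \<exists>y\<in>S. f y = n)"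
  have "\<exists>y\<in>S. f y = n" unfolding n_def by (rule LeastI_ex) (use assms in blast)
  moreover have "\<forall>y\<in>S. n \<le> f y" unfolding n_def by (auto intro: Least_le)
  ultimately show ?thesis by auto
qed

lemma ba_R: "belief_algebra W G \<Longrightarrow> G \<subseteq> R_W W"
  unfolding belief_algebra_def by (elim conjE)

lemma ba_A1: assumes "belief_algebra W G" "U \<subseteq> W" shows "((U, {}) \<in> G) = (U \<noteq> {})"
proof -
  have "\<forall>U. U \<subseteq> W \<longrightarrow> ((U, {}) \<in> G \<longleftrightarrow> U \<noteq> {})"
    using assms(1) unfolding belief_algebra_def by (elim conjE)
  then show ?thesis using assms(2) by simp
qed

lemma ba_A2: assumes "belief_algebra W G" "U \<subseteq> W" "V \<subseteq> W" "(U, V) \<in> G" shows "(V, U) \<notin> G"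
proof -
  have "\<forall>U V. U \<subseteq> W \<longrightarrow> V \<subseteq> W \<longrightarrow> (U, V) \<in> G \<longrightarrow> (V, U) \<notin> G"
    using assms(1) unfolding belief_algebra_def by (elim conjE)
  from this[rule_format, OF assms(2-)] show ?thesis .
qed

lemma ba_A3: assumes "belief_algebra W G" "U \<subseteq> W" "V \<subseteq> W" "U1 \<subseteq> W" "V1 \<subseteq> W"
        "U \<subseteq> U1" "(U, V) \<in> G" "V1 \<subseteq> V" "U1 \<inter> V1 = {}" shows "(U1, V1) \<in> G"
proof -
  have "\<forall>U V U1 V1. U \<subseteq> W \<longrightarrow> V \<subseteq> W \<longrightarrow> U1 \<subseteq> W \<longrightarrow> V1 \<subseteq> W \<longrightarrow>
        U \<subseteq> U1 \<longrightarrow> (U, V) \<in> G \<longrightarrow> V1 \<subseteq> V \<longrightarrow> U1 \<inter> V1 = {} \<longrightarrow> (U1, V1) \<in> G"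
    using assms(1) unfolding belief_algebra_def by (elim conjE)
  from this[rule_format, OF assms(2-)] show ?thesis .
qed

lemma ba_A4: assumes "belief_algebra W G" "U1 \<subseteq> W" "V1 \<subseteq> W" "U2 \<subseteq> W" "V2 \<subseteq> W"
        "U1 \<union> V1 = U2 \<union> V2" "(U1, V1) \<in> G" "(U2, V2) \<in> G" shows
        "(U1 \<inter> U2, V1 \<union> V2) \<in> G"
proof -
  have "\<forall>U1 V1 U2 V2. U1 \<subseteq> W \<longrightarrow> V1 \<subseteq> W \<longrightarrow> U2 \<subseteq> W \<longrightarrow> V2 \<subseteq> W \<longrightarrow>
        U1 \<union> V1 = U2 \<union> V2 \<longrightarrow> (U1, V1) \<in> G \<longrightarrow> (U2, V2) \<in> G \<longrightarrow>
        (U1 \<inter> U2, V1 \<union> V2) \<in> G"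
    using assms(1) unfolding belief_algebra_def by (elim conjE)
  from this[rule_format, OF assms(2-)] show ?thesis .
qed

definition blk :: "'a set list \<Rightarrow> 'a \<Rightarrow> nat" where
  "blk D x = (LEAST i. i < length D \<and> x \<in> D ! i)"

definition MM :: "'a set \<Rightarrow> 'a set list \<Rightarrow> ('a set \<times> 'a set) set" where
  "MM W D = {(U,V). U \<subseteq> W \<and> V \<subseteq> W \<and> U \<inter> V = {} \<and> U \<noteq> {} \<and>
      (\<forall>v\<in>V. \<exists>u\<in>U. blk D u < blk D v)}"

definition HH :: "'a set list \<Rightarrow> nat \<Rightarrow> 'a set" where
  "HH D i = \<Union> {D ! j | j. i < j \<and> j < length D}"

locale part =
  fixes W :: "'a set" and D :: "'a set list"
  assumes ne: "\<forall>i < length D. D ! i \<noteq> {}"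
    and dj: "\<forall>i < length D. \<forall>j < length D. i \<noteq> j \<longrightarrow> D ! i \<inter> D ! j = {}"
    and un: "\<Union> (set D) = W"
begin

lemma blk_eq: assumes "i < length D" "x \<in> D ! i" shows "blk D x = i"
proof -
  have 1: "blk D x < length D \<and> x \<in> D ! blk D x"
    unfolding blk_def by (rule LeastI[of _ i]) (use assms in auto)
  show ?thesis using dj 1 assms by blast
qed

lemma blk_in: assumes "x \<in> W" shows "blk D x < length D" "x \<in> D ! blk D x"
proof -
  obtain i where "i < length D" "x \<in> D ! i" using assms un by (auto simp: in_set_conv_nth)
  then show "blk D x < length D" "x \<in> D ! blk D x" using blk_eq by auto
qed

lemma MM_ba: "belief_algebra W (MM W D)"
  unfolding belief_algebra_def
proof (intro conjI allI impI)
  show "MM W D \<subseteq> R_W W" unfolding MM_def R_W_def by auto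
next
  fix U assume "U \<subseteq> W"
  then show "((U, {}) \<in> MM W D) = (U \<noteq> {})" unfolding MM_def by auto
next
  fix U V assume "U \<subseteq> W" "V \<subseteq> W" "(U, V) \<in> MM W D"
  show "(V, U) \<notin> MM W D"
  proof
    assume h: "(V, U) \<in> MM W D"
    from \<open>(U, V) \<in> MM W D\<close> obtain x where "x \<in> U \<union> V" unfolding MM_def by auto
    then obtain w where w: "w \<in> U \<union> V" "\<forall>y\<in>U \<union> V. blk D w \<le> blk D y"
      using min_exists[of x "U \<union> V" "blk D"] by blast
    show False
    proof (cases "w \<in> U")
      case True
      obtain u where "u \<in> V" "blk D u < blk D w" using h True unfolding MM_def by blast
      with w show False by force
    next
      case False
      have "w \<in> V" using w False by blast
      then obtain u where "u \<in> U" "blk D u < blk D w" using \<open>(U, V) \<in> MM W D\<close> unfolding MM_def by blast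
      with w show False by force
    qed
  qed
next
  fix U V U1 V1 assume "U \<subseteq> W" "V \<subseteq> W" "U1 \<subseteq> W" "V1 \<subseteq> W" "U \<subseteq> U1" "(U, V) \<in> MM W D"
    "V1 \<subseteq> V" "U1 \<inter> V1 = {}"
  then show "(U1, V1) \<in> MM W D" unfolding MM_def by blast
next
  fix U1 V1 U2 V2 assume a: "U1 \<subseteq> W" "V1 \<subseteq> W" "U2 \<subseteq> W" "V2 \<subseteq> W"
    "U1 \<union> V1 = U2 \<union> V2" "(U1, V1) \<in> MM W D" "(U2, V2) \<in> MM W D"
  from a obtain x where "x \<in> U1 \<union> V1" unfolding MM_def by auto
  then obtain w where w: "w \<in> U1 \<union> V1" "\<forall>y\<in>U1 \<union> V1. blk D w \<le> blk D y"
    using min_exists[of x "U1 \<union> V1" "blk D"] by blast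
  have wV1: "w \<notin> V1"
  proof
    assume "w \<in> V1"
    then obtain u where "u \<in> U1" "blk D u < blk D w" using a(6) unfolding MM_def by blast
    with w show False by force
  qed
  have wV2: "w \<notin> V2"
  proof
    assume "w \<in> V2"
    then obtain u where "u \<in> U2" "blk D u < blk D w" using a(7) unfolding MM_def by blast
    with w a(5) show False by force
  qed
  have wU: "w \<in> U1 \<inter> U2" using w wV1 wV2 a(5) by blast
  have "\<forall>v\<in>V1 \<union> V2. \<exists>u\<in>U1 \<inter> U2. blk D u < blk D v"
  proof
    fix v assume "v \<in> V1 \<union> V2"
    then obtain u where "u \<in> U1 \<union> V1" "blk D u < blk D v"
      using a unfolding MM_def by blast
    then have "blk D w < blk D v" using w by (meson le_less_trans)
    with wU show "\<exists>u\<in>U1 \<inter> U2. blk D u < blk D v" by blast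
  qed
  then show "(U1 \<inter> U2, V1 \<union> V2) \<in> MM W D" using a wU unfolding MM_def by blast
qed

lemma MM_bb: "is_backbone W (MM W D) D"
  unfolding is_backbone_def
proof (intro conjI)
  show "\<forall>i. Suc i < length D \<longrightarrow> (D ! i, D ! Suc i) \<in> MM W D"
  proof (intro allI impI)
    fix i assume i: "Suc i < length D"
    have s: "D ! i \<subseteq> W" "D ! Suc i \<subseteq> W" using un i by (auto simp: nth_mem)
    show "(D ! i, D ! Suc i) \<in> MM W D"
      unfolding MM_def using s ne dj i blk_eq[of i] blk_eq[of "Suc i"]
      by (auto; metis Suc_lessD lessI n_not_Suc_n ex_in_conv)
  qed
next
  show "\<forall>i<length D. \<forall>V1 V2. V1 \<subseteq> D ! i \<longrightarrow> V2 \<subseteq> D ! i \<longrightarrow> V1 \<noteq> {} \<longrightarrow> V2 \<noteq> {} \<longrightarrow>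
        V1 \<inter> V2 = {} \<longrightarrow> (V1, V2) \<notin> MM W D \<and> (V2, V1) \<notin> MM W D"
  proof (intro allI impI)
    fix i V1 V2 assume h: "i < length D" "V1 \<subseteq> D ! i" "V2 \<subseteq> D ! i" "V1 \<noteq> {}" "V2 \<noteq> {}"
    have "\<forall>x \<in> V1 \<union> V2. blk D x = i" using h blk_eq by blast
    then show "(V1, V2) \<notin> MM W D \<and> (V2, V1) \<notin> MM W D" unfolding MM_def using h
      by auto
  qed
qed (use ne dj un in auto)

lemma HH_step: assumes "Suc i < length D"
  shows "HH D i = D ! Suc i \<union> HH D (Suc i)"
proof
  show "HH D i \<subseteq> D ! Suc i \<union> HH D (Suc i)"
  proof
    fix x assume "x \<in> HH D i"
    then obtain j where j: "i < j" "j < length D" "x \<in> D ! j" unfolding HH_def by blast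
    show "x \<in> D ! Suc i \<union> HH D (Suc i)"
    proof (cases "j = Suc i")
      case True then show ?thesis using j by simp
    next
      case False then have "Suc i < j" using j by simp
      then show ?thesis using j unfolding HH_def by blast
    qed
  qed
next
  show "D ! Suc i \<union> HH D (Suc i) \<subseteq> HH D i"
  proof
    fix x assume "x \<in> D ! Suc i \<union> HH D (Suc i)"
    then obtain j where j: "Suc i \<le> j" "j < length D" "x \<in> D ! j"
      using assms unfolding HH_def by (auto intro: less_imp_le)
    then show "x \<in> HH D i" unfolding HH_def by (auto intro!: exI[of _ "D ! j"])
  qed
qed

lemma HH_last: assumes "Suc i = length D" shows "HH D i = {}"
  unfolding HH_def using assms by auto

lemma HH_dj: assumes "i < length D" shows "D ! i \<inter> HH D i = {}"
  unfolding HH_def using assms dj by auto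

lemma HH_sub: "HH D i \<subseteq> W" unfolding HH_def using un by (auto simp: nth_mem)

lemma D_sub: "i < length D \<Longrightarrow> D ! i \<subseteq> W" using un by (auto simp: nth_mem)

lemma chain_step:
  assumes ba: "belief_algebra W G" and bb: "is_backbone W G D"
    and si: "Suc i < length D" and IH: "(D ! Suc i, HH D (Suc i)) \<in> G"
  shows "(D ! i, HH D i) \<in> G"
proof -
  have b: "(D ! i, D ! Suc i) \<in> G" using bb si unfolding is_backbone_def by blast
  let ?A = "D ! i" and ?B = "D ! Suc i" and ?H = "HH D (Suc i)"
  have AB: "?A \<inter> ?B = {}" using dj si by simp
  have BH: "?B \<inter> ?H = {}" using HH_dj si by simp
  have "?A \<inter> HH D i = {}" using HH_dj si by simp
  then have AH: "?A \<inter> ?H = {}" using HH_step[OF si] by blast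
  have sA: "?A \<subseteq> W" and sB: "?B \<subseteq> W" and sH: "?H \<subseteq> W" using D_sub si HH_sub by auto
  have sAH: "?A \<union> ?H \<subseteq> W" and sAB: "?A \<union> ?B \<subseteq> W" using sA sB sH by simp_all
  have d1: "(?A \<union> ?H) \<inter> ?B = {}" using AB BH by blast
  have d2: "(?A \<union> ?B) \<inter> ?H = {}" using AH BH by blast
  have 1: "(?A \<union> ?H, ?B) \<in> G"
    by (rule ba_A3[OF ba sA sB sAH sB _ b order_refl d1]) simp
  have 2: "(?A \<union> ?B, ?H) \<in> G"
    by (rule ba_A3[OF ba sB sH sAB sH _ IH order_refl d2]) simp
  have u: "(?A \<union> ?H) \<union> ?B = (?A \<union> ?B) \<union> ?H" by blast
  have 3: "((?A \<union> ?H) \<inter> (?A \<union> ?B), ?B \<union> ?H) \<in> G"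
    by (rule ba_A4[OF ba sAH sB sAB sH u 1 2])
  have e: "(?A \<union> ?H) \<inter> (?A \<union> ?B) = ?A" using BH by blast
  show ?thesis using 3 unfolding e HH_step[OF si, symmetric] .
qed

lemma chain:
  assumes ba: "belief_algebra W G" and bb: "is_backbone W G D" and i: "i < length D"
  shows "(D ! i, HH D i) \<in> G"
proof -
  have le: "i \<le> length D - 1" using i by simp
  have last: "(D ! (length D - 1), HH D (length D - 1)) \<in> G"
  proof -
    have l: "Suc (length D - 1) = length D" using i by simp
    have "D ! (length D - 1) \<noteq> {}" "D ! (length D - 1) \<subseteq> W" using ne D_sub i by auto
    then show ?thesis using HH_last[OF l] ba_A1[OF ba] by simp
  qed
  show ?thesis using le
  proof (induction rule: inc_induct)
    case base then show ?case using last .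
  next
    case (step n)
    then have "Suc n < length D" by simp
    then show ?case using chain_step[OF ba bb] step.IH by blast
  qed
qed

lemma sub_MM:
  assumes ba: "belief_algebra W G" and bb: "is_backbone W G D"
  shows "G \<subseteq> MM W D"
proof
  fix p assume "p \<in> G"
  then obtain U V where p: "p = (U, V)" "(U, V) \<in> G" by (cases p) auto
  have A3: "\<And>U V U1 V1. U \<subseteq> W \<Longrightarrow> V \<subseteq> W \<Longrightarrow> U1 \<subseteq> W \<Longrightarrow> V1 \<subseteq> W \<Longrightarrow>
      U \<subseteq> U1 \<Longrightarrow> (U, V) \<in> G \<Longrightarrow> V1 \<subseteq> V \<Longrightarrow> U1 \<inter> V1 = {} \<Longrightarrow> (U1, V1) \<in> G"
      by (rule ba_A3[OF ba])
  have A4: "\<And>U1 V1 U2 V2. U1 \<subseteq> W \<Longrightarrow> V1 \<subseteq> W \<Longrightarrow> U2 \<subseteq> W \<Longrightarrow> V2 \<subseteq> W \<Longrightarrow>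
      U1 \<union> V1 = U2 \<union> V2 \<Longrightarrow> (U1, V1) \<in> G \<Longrightarrow> (U2, V2) \<in> G \<Longrightarrow>
      (U1 \<inter> U2, V1 \<union> V2) \<in> G"
      by (rule ba_A4[OF ba])
  have A1: "\<And>U. U \<subseteq> W \<Longrightarrow> ((U, {}) \<in> G) = (U \<noteq> {})"
      by (rule ba_A1[OF ba])
  have A2: "\<And>U V. U \<subseteq> W \<Longrightarrow> V \<subseteq> W \<Longrightarrow> (U, V) \<in> G \<Longrightarrow> (V, U) \<notin> G"
      by (rule ba_A2[OF ba])
  have noempty: "\<And>V. V \<subseteq> W \<Longrightarrow> ({}, V) \<notin> G"
  proof
    fix V assume "V \<subseteq> W" "({}, V) \<in> G"
    then show False using A1[of "{}"] A1[of V] A2[of V "{}"] by (cases "V = {}") auto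
  qed
  have R: "U \<subseteq> W" "V \<subseteq> W" "U \<inter> V = {}" using p ba_R[OF ba] unfolding R_W_def by auto
  have Une: "U \<noteq> {}" using noempty R p by auto
  have "\<forall>v\<in>V. \<exists>u\<in>U. blk D u < blk D v"
  proof (rule ccontr)
    assume "\<not> ?thesis"
    then obtain v where v: "v \<in> V" "\<forall>u\<in>U. blk D v \<le> blk D u" by force
    define i where "i = blk D v"
    have vW: "v \<in> W" using v R by auto
    have i: "i < length D" "v \<in> D ! i" using blk_in[OF vW] i_def by auto
    let ?B = "D ! i" and ?H = "HH D i"
    have sB: "?B \<subseteq> W" and sH: "?H \<subseteq> W" using D_sub i HH_sub by auto
    have BH: "?B \<inter> ?H = {}" using HH_dj i by auto
    have UBH: "U \<subseteq> ?B \<union> ?H"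
    proof
      fix u assume "u \<in> U"
      then have "u \<in> W" "i \<le> blk D u" using v R i_def by auto
      then have b: "blk D u < length D" "u \<in> D ! blk D u" "i \<le> blk D u" using blk_in[of u] by auto
      show "u \<in> ?B \<union> ?H"
      proof (cases "i = blk D u")
        case True then show ?thesis using b by simp
      next
        case False then have "i < blk D u" using b by simp
        then show ?thesis using b unfolding HH_def by blast
      qed
    qed
    have c: "(?B, ?H) \<in> G" using chain[OF ba bb i(1)] .
    have s1: "(?B \<union> ?H) - {v} \<subseteq> W" using sB sH by blast
    have s2: "{v} \<subseteq> W" using vW by simp
    have su: "U \<subseteq> (?B \<union> ?H) - {v}" using UBH v(1) R(3) by blast
    have 1: "((?B \<union> ?H) - {v}, {v}) \<in> G"
      by (rule A3[OF R(1,2) s1 s2 su p(2)]) (use v(1) in auto)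
    have uu: "?B \<union> ?H = ((?B \<union> ?H) - {v}) \<union> {v}" using i(2) by blast
    have 2: "(?B \<inter> ((?B \<union> ?H) - {v}), ?H \<union> {v}) \<in> G"
      by (rule A4[OF sB sH s1 s2 uu c 1])
    have e: "?B \<inter> ((?B \<union> ?H) - {v}) = ?B - {v}" by blast
    have c2: "(?B - {v}, ?H \<union> {v}) \<in> G" using 2 unfolding e .
    have sHv: "?H \<union> {v} \<subseteq> W" using sH vW by simp
    show False
    proof (cases "?B - {v} = {}")
      case True
      then show False using c2 noempty[OF sHv] by (simp only:)
    next
      case False
      have sBv: "?B - {v} \<subseteq> W" using sB by blast
      have "(?B - {v}, {v}) \<in> G"
        by (rule A3[OF sBv sHv sBv s2 order_refl c2]) auto
      moreover have "(?B - {v}, {v}) \<notin> G"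
      proof -
        have "\<forall>i < length D. \<forall>V1 V2. V1 \<subseteq> D ! i \<longrightarrow> V2 \<subseteq> D ! i \<longrightarrow> V1 \<noteq> {} \<longrightarrow> V2 \<noteq> {} \<longrightarrow>
          V1 \<inter> V2 = {} \<longrightarrow> (V1, V2) \<notin> G \<and> (V2, V1) \<notin> G"
          using bb unfolding is_backbone_def by (elim conjE)
        from this[rule_format, OF i(1), of "?B - {v}" "{v}"] show ?thesis using i(2) False by blast
      qed
      ultimately show False by contradiction
    qed
  qed
  then show "p \<in> MM W D" using p R Une unfolding MM_def by auto
qed

end

lemma ba_int: assumes a1: "belief_algebra W G1" and a2: "belief_algebra W G2"
  shows "belief_algebra W (G1 \<inter> G2)"
  unfolding belief_algebra_def
proof (intro conjI allI impI)
  show "G1 \<inter> G2 \<subseteq> R_W W" using ba_R[OF a1] by blast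
next
  fix U assume "U \<subseteq> W"
  then show "((U, {}) \<in> G1 \<inter> G2) = (U \<noteq> {})"
    using ba_A1[OF a1] ba_A1[OF a2] by simp
next
  fix U V assume h: "U \<subseteq> W" "V \<subseteq> W" "(U, V) \<in> G1 \<inter> G2"
  have "(V, U) \<notin> G1" using ba_A2[OF a1] h by blast
  then show "(V, U) \<notin> G1 \<inter> G2" by blast
next
  fix U V U1 V1 assume h: "U \<subseteq> W" "V \<subseteq> W" "U1 \<subseteq> W" "V1 \<subseteq> W" "U \<subseteq> U1" "(U, V) \<in> G1 \<inter> G2"
    "V1 \<subseteq> V" "U1 \<inter> V1 = {}"
  have "(U1, V1) \<in> G1" using ba_A3[OF a1 h(1-5) _ h(7,8)] h(6) by blast
  moreover have "(U1, V1) \<in> G2" using ba_A3[OF a2 h(1-5) _ h(7,8)] h(6) by blast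
  ultimately show "(U1, V1) \<in> G1 \<inter> G2" by blast
next
  fix U1 V1 U2 V2 assume h: "U1 \<subseteq> W" "V1 \<subseteq> W" "U2 \<subseteq> W" "V2 \<subseteq> W"
    "U1 \<union> V1 = U2 \<union> V2" "(U1, V1) \<in> G1 \<inter> G2" "(U2, V2) \<in> G1 \<inter> G2"
  have "(U1 \<inter> U2, V1 \<union> V2) \<in> G1" using ba_A4[OF a1 h(1-5)] h(6,7) by blast
  moreover have "(U1 \<inter> U2, V1 \<union> V2) \<in> G2" using ba_A4[OF a2 h(1-5)] h(6,7) by blast
  ultimately show "(U1 \<inter> U2, V1 \<union> V2) \<in> G1 \<inter> G2" by blast
qed

lemma bb_D: "is_backbone W G D \<Longrightarrow>
     (\<forall>i < length D. D ! i \<noteq> {}) \<and>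
     (\<forall>i < length D. \<forall>j < length D. i \<noteq> j \<longrightarrow> D ! i \<inter> D ! j = {}) \<and>
     \<Union> (set D) = W"
  unfolding is_backbone_def by (elim conjE) (intro conjI)

lemma bb_chain: "is_backbone W G D \<Longrightarrow> Suc i < length D \<Longrightarrow> (D ! i, D ! Suc i) \<in> G"
proof -
  assume a: "is_backbone W G D" "Suc i < length D"
  have "\<forall>i. Suc i < length D \<longrightarrow> (D ! i, D ! Suc i) \<in> G"
    using a(1) unfolding is_backbone_def by (elim conjE)
  from this[rule_format, OF a(2)] show ?thesis .
qed

lemma bb_inner: "is_backbone W G D \<Longrightarrow> i < length D \<Longrightarrow> V1 \<subseteq> D ! i \<Longrightarrow> V2 \<subseteq> D ! i \<Longrightarrow>
   V1 \<noteq> {} \<Longrightarrow> V2 \<noteq> {} \<Longrightarrow> V1 \<inter> V2 = {} \<Longrightarrow> (V1, V2) \<notin> G"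
proof -
  assume a: "is_backbone W G D" "i < length D" "V1 \<subseteq> D ! i" "V2 \<subseteq> D ! i"
   "V1 \<noteq> {}" "V2 \<noteq> {}" "V1 \<inter> V2 = {}"
  have "\<forall>i < length D. \<forall>V1 V2. V1 \<subseteq> D ! i \<longrightarrow> V2 \<subseteq> D ! i \<longrightarrow> V1 \<noteq> {} \<longrightarrow> V2 \<noteq> {} \<longrightarrow>
        V1 \<inter> V2 = {} \<longrightarrow> (V1, V2) \<notin> G \<and> (V2, V1) \<notin> G"
    using a(1) unfolding is_backbone_def by (elim conjE)
  from this[rule_format, OF a(2-7)] show ?thesis by (elim conjE)
qed

lemma bb_intro:
  assumes "is_backbone W G D"
    and "\<And>i. Suc i < length D \<Longrightarrow> (D ! i, D ! Suc i) \<in> G'"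
    and "\<And>i V1 V2. i < length D \<Longrightarrow> V1 \<subseteq> D ! i \<Longrightarrow> V2 \<subseteq> D ! i \<Longrightarrow>
           V1 \<noteq> {} \<Longrightarrow> V2 \<noteq> {} \<Longrightarrow> V1 \<inter> V2 = {} \<Longrightarrow> (V1, V2) \<notin> G'"
  shows "is_backbone W G' D"
proof -
  note d = bb_D[OF assms(1)]
  show ?thesis unfolding is_backbone_def
  proof (intro conjI allI impI)
    fix i V1 V2 assume h: "i < length D" "V1 \<subseteq> D ! i" "V2 \<subseteq> D ! i" "V1 \<noteq> {}" "V2 \<noteq> {}" "V1 \<inter> V2 = {}"
    show "(V1, V2) \<notin> G'" by (rule assms(3)[OF h])
    have "V2 \<inter> V1 = {}" using h(6) by (simp only: Int_commute)
    then show "(V2, V1) \<notin> G'" using assms(3)[OF h(1,3,2,5,4)] by simp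
  qed (use d assms(2) in auto)
qed

lemma bb_int: assumes a1: "is_backbone W G1 D" and a2: "is_backbone W G2 D"
  shows "is_backbone W (G1 \<inter> G2) D"
  by (rule bb_intro[OF a1]) (use bb_chain[OF a1] bb_chain[OF a2] bb_inner[OF a1] in auto)

lemma Gen_sub: assumes "belief_algebra W M" "\<Omega> \<subseteq> M"
  shows "Gen W \<Omega> \<subseteq> M"
proof
  fix p assume "p \<in> Gen W \<Omega>"
  then show "p \<in> M"
  proof (induction rule: Gen.induct)
    case (base p) then show ?case using assms by blast
  next
    case (empty U) then show ?case using ba_A1[OF assms(1)] by blast
  next
    case (mono U V U1 V1)
    have "U \<subseteq> W" "V \<subseteq> W" using mono ba_R[OF assms(1)] unfolding R_W_def by auto
    then show ?case using mono ba_A3[OF assms(1)] by (meson order_trans)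
  next
    case (inter U1 V1 U2 V2)
    have "U1 \<subseteq> W" "V1 \<subseteq> W" "U2 \<subseteq> W" "V2 \<subseteq> W"
      using inter ba_R[OF assms(1)] unfolding R_W_def by auto
    then show ?case using inter ba_A4[OF assms(1)] by blast
  qed
qed

lemma Gen_ba: assumes "belief_algebra W M" "Gen W \<Omega> \<subseteq> M"
  shows "belief_algebra W (Gen W \<Omega>)"
  unfolding belief_algebra_def
proof (intro conjI allI impI)
  show "Gen W \<Omega> \<subseteq> R_W W" using assms ba_R by blast
next
  fix U assume "U \<subseteq> W"
  then show "((U, {}) \<in> Gen W \<Omega>) = (U \<noteq> {})"
    using assms ba_A1[OF assms(1)] Gen.empty by blast
next
  fix U V assume "U \<subseteq> W" "V \<subseteq> W" "(U, V) \<in> Gen W \<Omega>"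
  then show "(V, U) \<notin> Gen W \<Omega>" using assms ba_A2[OF assms(1)] by blast
next
  fix U V U1 V1 assume "U \<subseteq> W" "V \<subseteq> W" "U1 \<subseteq> W" "V1 \<subseteq> W" "U \<subseteq> U1" "(U, V) \<in> Gen W \<Omega>"
    "V1 \<subseteq> V" "U1 \<inter> V1 = {}"
  then show "(U1, V1) \<in> Gen W \<Omega>" by (blast intro: Gen.mono)
next
  fix U1 V1 U2 V2 assume "U1 \<union> V1 = U2 \<union> V2" "(U1, V1) \<in> Gen W \<Omega>" "(U2, V2) \<in> Gen W \<Omega>"
  then show "(U1 \<inter> U2, V1 \<union> V2) \<in> Gen W \<Omega>" by (blast intro: Gen.inter)
qed

lemma Gen_bb: assumes a1: "is_backbone W G D" and a2: "is_backbone W M D" and s: "Gen W \<Omega> \<subseteq> M" "G \<subseteq> Gen W \<Omega>"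
  shows "is_backbone W (Gen W \<Omega>) D"
  by (rule bb_intro[OF a1]) (use bb_chain[OF a1] bb_inner[OF a2] s in blast)+

theorem theorem2:
  fixes W :: "'a set" and \<Delta> :: "'a set list" and G1 G2 :: "('a set \<times> 'a set) set"
  assumes "finite W" and "W \<noteq> {}"
    and "G1 \<in> BA W \<Delta>" and "G2 \<in> BA W \<Delta>"
  shows "G1 \<inter> G2 \<in> BA W \<Delta> \<and>
         (belief_algebra W (Gen W (G1 \<union> G2)) \<and> Gen W (G1 \<union> G2) \<in> BA W \<Delta>)"
proof -
  have b1: "belief_algebra W G1" "is_backbone W G1 \<Delta>" and b2: "belief_algebra W G2" "is_backbone W G2 \<Delta>"
    using assms unfolding BA_def by simp_all
  interpret part W \<Delta> using bb_D[OF b1(2)] unfolding part_def by (elim conjE) (intro conjI)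
  have p1: "G1 \<inter> G2 \<in> BA W \<Delta>"
    unfolding BA_def using ba_int[OF b1(1) b2(1)] bb_int[OF b1(2) b2(2)] by blast
  have s1: "G1 \<subseteq> MM W \<Delta>" "G2 \<subseteq> MM W \<Delta>" using sub_MM b1 b2 by auto
  have gm: "Gen W (G1 \<union> G2) \<subseteq> MM W \<Delta>"
    using Gen_sub[OF MM_ba, of "G1 \<union> G2"] s1 by blast
  have r1: "G1 \<subseteq> R_W W" using ba_R[OF b1(1)] .
  have bag: "belief_algebra W (Gen W (G1 \<union> G2))"
    by (rule Gen_ba[OF MM_ba gm])
  have bbg: "is_backbone W (Gen W (G1 \<union> G2)) \<Delta>"
    by (rule Gen_bb[OF b1(2) MM_bb gm]) (use r1 in \<open>auto intro: Gen.base\<close>)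
  show ?thesis using p1 bag bbg unfolding BA_def by blast
qed

end
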